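(* Let $\Omega$ be a Polish space and $\mathcal{P}$ a weakly relatively compact set of Borel probability measures on $\Omega$. There is a countable subset $\mathcal{Q}=\{P_n,\ n\in\mathbb{N}\}$ of $\mathcal{P}$ such that for every $p\in[1,\infty)$ and every $X\in L^1(c_{p,\mathcal{P}})$, $$c_{p,\mathcal{P}}(X)=\sup_{n\in\mathbb{N}}\big(E_{P_n}(|X|^p)\big)^{1/p}.$$ Moreover the capacities $c_{p,\mathcal{P}}$ and $c_{p,\mathcal{Q}}$ (defined on $\mathcal{C}_b(\Omega)$ and extended to all real functions) are equal, and $L^1(c_{p,\mathcal{P}})=L^1(c_{p,\mathcal{Q}})$.
   Context: For a set $\mathcal{R}$ of Borel probability measures and $1\le p<\infty$, $c_{p,\mathcal{R}}(f)=\sup_{P\in\mathcal{R}}E_P(|f|^p)^{1/p}$ for $f\in\mathcal{C}_b(\Omega)$ (a capacity when $\mathcal{R}$ is weakly relatively compact: a monotone seminorm with $\inf_n c(f_n)=0$ for $f_n$ decreasing to $0$). It is extended to all real functions by $c(f)=\sup\{c(\varphi):\varphi\in\mathcal{C}_b(\Omega),0\le\varphi\le f\}$ for $f\ge0$ lower semicontinuous and $c(g)=\inf\{c(f):f\text{ l.s.c.},f\ge|g|\}$ in general. $L^1(c)$ denotes the Banach space obtained as the quotient by $c$-null elements of the closure of $\mathcal{C}_b(\Omega)$ for $c$ in $\{g: c(g)<\infty\}$. Weak topology: the coarsest making $\mu\mapsto\int f\,d\mu$ continuous for every $f\in\mathcal{C}_b(\Omega)$. *)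

theory Defs
  imports "HOL-Probability.Probability"
begin

definition Cb :: "('a::topological_space \<Rightarrow> real) set" where
  "Cb = {f. continuous_on UNIV f \<and> bounded (range f)}"

definition borel_prob_measures :: "'a::topological_space measure set" where
  "borel_prob_measures = {M. prob_space M \<and> sets M = sets borel}"

(* weak topology: coarsest topology on the Borel probability measures making
   M \<mapsto> \<integral> f dM continuous for every f in C_b *)
definition weak_topology :: "'a::topological_space measure topology" where
  "weak_topology = pullback_topology borel_prob_measures
      (\<lambda>M. \<lambda>f\<in>Cb. integral\<^sup>L M f) (product_topology (\<lambda>_. euclideanreal) Cb)"

definition weakly_rel_compact :: "'a::topological_space measure set \<Rightarrow> bool" where
  "weakly_rel_compact R \<longleftrightarrow> compactin weak_topology (weak_topology closure_of R)"

definition ennroot :: "real \<Rightarrow> ennreal \<Rightarrow> ennreal" where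
  "ennroot p x = (if x = \<top> then \<top> else ennreal (enn2real x powr (1 / p)))"

definition Epow :: "real \<Rightarrow> 'a measure \<Rightarrow> ('a \<Rightarrow> real) \<Rightarrow> ennreal" where
  "Epow p P f = ennroot p (\<integral>\<^sup>+ x. ennreal (\<bar>f x\<bar> powr p) \<partial>P)"

definition cap_Cb :: "real \<Rightarrow> 'a measure set \<Rightarrow> ('a \<Rightarrow> real) \<Rightarrow> ennreal" where
  "cap_Cb p R f = (SUP P\<in>R. Epow p P f)"

definition lsc :: "('a::topological_space \<Rightarrow> real) \<Rightarrow> bool" where
  "lsc f \<longleftrightarrow> (\<forall>t. open {x. t < f x})"

(* extension to nonnegative lower semicontinuous functions *)
definition cap_lsc :: "real \<Rightarrow> 'a::topological_space measure set \<Rightarrow> ('a \<Rightarrow> real) \<Rightarrow> ennreal" where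
  "cap_lsc p R f = (SUP \<phi>\<in>{\<phi>\<in>Cb. \<forall>x. 0 \<le> \<phi> x \<and> \<phi> x \<le> f x}. cap_Cb p R \<phi>)"

definition cap :: "real \<Rightarrow> 'a::topological_space measure set \<Rightarrow> ('a \<Rightarrow> real) \<Rightarrow> ennreal" where
  "cap p R g = (INF f\<in>{f. lsc f \<and> (\<forall>x. \<bar>g x\<bar> \<le> f x)}. cap_lsc p R f)"

(* representatives of L^1(c_{p,R}): closure of C_b in {g. c g < \<infinity>} for the seminorm c *)
definition L1_set :: "real \<Rightarrow> 'a::topological_space measure set \<Rightarrow> ('a \<Rightarrow> real) set" where
  "L1_set p R = {g. cap p R g < \<top> \<and> (\<forall>e>0. \<exists>\<phi>\<in>Cb. cap p R (\<lambda>x. g x - \<phi> x) < e)}"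

end

theory Submission
  imports Defs
begin


definition epow :: "real \<Rightarrow> ennreal \<Rightarrow> ennreal" where
  "epow p b = (if b = \<top> then \<top> else ennreal (enn2real b powr p))"

lemma ennroot_le_iff:
  assumes p: "p > 0"
  shows "ennroot p a \<le> b \<longleftrightarrow> a \<le> epow p b"
proof (cases "a = \<top>")
  case True
  then show ?thesis by (auto simp: ennroot_def epow_def top_unique)
next
  case False
  then obtain x where x: "a = ennreal x" "x \<ge> 0" by (cases a) auto
  show ?thesis
  proof (cases "b = \<top>")
    case True then show ?thesis by (simp add: ennroot_def epow_def)
  next
    case False
    then obtain y where y: "b = ennreal y" "y \<ge> 0" by (cases b) auto
    have "x powr (1/p) \<le> y \<longleftrightarrow> x \<le> y powr p"
    proof
      assume h: "x powr (1/p) \<le> y"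
      have "x = (x powr (1/p)) powr p" using p x by (simp add: powr_powr)
      also have "\<dots> \<le> y powr p" using h p by (intro powr_mono2) auto
      finally show "x \<le> y powr p" .
    next
      assume h: "x \<le> y powr p"
      have "x powr (1/p) \<le> (y powr p) powr (1/p)" using h p x by (intro powr_mono2) auto
      also have "\<dots> = y" using p y by (simp add: powr_powr)
      finally show "x powr (1/p) \<le> y" .
    qed
    then show ?thesis using x y by (simp add: ennroot_def epow_def ennreal_le_iff)
  qed
qed

lemma ennroot_mono: "p > 0 \<Longrightarrow> a \<le> a' \<Longrightarrow> ennroot p a \<le> ennroot p a'"
  by (metis ennroot_le_iff order.trans order_refl)

lemma ennroot_SUP:
  assumes p: "p > 0"
  shows "ennroot p (SUP i\<in>I. a i) = (SUP i\<in>I. ennroot p (a i))"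
proof (rule antisym)
  show "ennroot p (SUP i\<in>I. a i) \<le> (SUP i\<in>I. ennroot p (a i))"
    unfolding ennroot_le_iff[OF p]
    by (intro SUP_least) (metis SUP_upper ennroot_le_iff p)
  show "(SUP i\<in>I. ennroot p (a i)) \<le> ennroot p (SUP i\<in>I. a i)"
    by (intro SUP_least ennroot_mono p SUP_upper)
qed

lemma Epow_mono:
  assumes "p > 0" "\<And>x. \<bar>u x\<bar> \<le> \<bar>v x\<bar>"
  shows "Epow p M u \<le> Epow p M v"
  unfolding Epow_def
  by (intro ennroot_mono assms nn_integral_mono ennreal_leI powr_mono2) (use assms in auto)





lemma powr_ge1_neg: fixes l p :: real assumes "0 < l" "l \<le> 1" "p \<ge> 1" shows "l powr (1-p) \<ge> 1"
  by (metis assms(1,2,3) diff_le_0_iff_le powr_mono2' powr_one_eq_one)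

lemma alg1: fixes a b p :: real assumes "a > 0" "b > 0"
  shows "(a/(a+b)) powr (1-p) * a powr p = a * (a+b) powr (p-1)"
proof -
  have 1: "(a/(a+b)) powr (1-p) = a powr (1-p) / (a+b) powr (1-p)" using assms by (simp add: powr_divide)
  have 2: "a powr (1-p) * a powr p = a" using assms by (simp add: powr_add[symmetric])
  have 3: "(a+b) powr (p-1) = inverse ((a+b) powr (1-p))"
    using assms by (metis minus_diff_eq powr_minus)
  show ?thesis unfolding 1 3 using 2 by (simp add: field_simps)
qed

lemma alg2: fixes u l p :: real assumes "u \<ge> 0" "l > 0"
  shows "l * (u/l) powr p = l powr (1-p) * u powr p"
proof -
  have "l * (u/l) powr p = l * (u powr p / l powr p)" using assms by (simp add: powr_divide)
  also have "\<dots> = (l powr 1 / l powr p) * u powr p" using assms by simp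
  also have "\<dots> = l powr (1-p) * u powr p" by (simp add: powr_diff)
  finally show ?thesis .
qed

lemma convx: fixes u v l p :: real assumes "u > 0" "v > 0" "0 < l" "l < 1" "p \<ge> 1"
  shows "(u+v) powr p \<le> l * (u/l) powr p + (1-l) * (v/(1-l)) powr p"
proof -
  have "(\<lambda>x. x powr p) ((1 - (1-l)) *\<^sub>R (u/l) + (1-l) *\<^sub>R (v/(1-l))) \<le> (1 - (1-l)) * (\<lambda>x. x powr p) (u/l) + (1-l) * (\<lambda>x. x powr p) (v/(1-l))"
    by (rule convex_onD[OF powr_convex]) (use assms in auto)
  then show ?thesis using assms by simp
qed

lemma pointwise_convex:
  fixes u v l p :: real
  assumes u: "u \<ge> 0" and v: "v \<ge> 0" and l: "0 < l" "l < 1" and p: "p \<ge> 1"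
  shows "(u+v) powr p \<le> l powr (1-p) * u powr p + (1-l) powr (1-p) * v powr p"
proof -
  have g1: "l powr (1-p) \<ge> 1" "(1-l) powr (1-p) \<ge> 1" using l p by (auto intro!: powr_ge1_neg)
  have nn: "u powr p \<ge> 0" "v powr p \<ge> 0" by auto
  show ?thesis
  proof (cases "u = 0")
    case True
    then show ?thesis using g1 nn p
      by simp (metis mult_left_mono mult_1 mult.commute powr_ge_zero order.trans g1(2) mult_right_mono)
  next
    case u0: False
    show ?thesis
    proof (cases "v = 0")
      case True
      then show ?thesis using g1 nn p
        by simp (metis mult_1 powr_ge_zero mult_right_mono)
    next
      case False
      with u0 u v have "u > 0" "v > 0" by auto
      from convx[OF this l p] show ?thesis
        using alg2[OF u l(1), of p] alg2[OF v, of "1-l" p] l by simp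
    qed
  qed
qed

lemma epow_ennreal: "epow p (ennreal x) = ennreal ((max 0 x) powr p)"
  by (cases "x \<ge> 0") (auto simp: epow_def max_def ennreal_neg)

lemma minkowski:
  assumes p: "p \<ge> 1" and um: "u \<in> borel_measurable M" and vm: "v \<in> borel_measurable M"
    and u0: "\<And>x. u x \<ge> 0" and v0: "\<And>x. v x \<ge> 0"
  shows "Epow p M (\<lambda>x. u x + v x) \<le> Epow p M u + Epow p M v"
proof -
  have p0: "p > 0" using p by simp
  define A where "A = Epow p M u"
  define B where "B = Epow p M v"
  define I where "I = (\<integral>\<^sup>+ x. ennreal (\<bar>u x + v x\<bar> powr p) \<partial>M)"
  show ?thesis
  proof (cases "A = \<top> \<or> B = \<top>")
    case True then show ?thesis unfolding A_def[symmetric] B_def[symmetric] by auto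
  next
    case False
    then obtain a b where ab: "A = ennreal a" "B = ennreal b" "a \<ge> 0" "b \<ge> 0"
      by (metis ennreal_cases top.not_eq_extremum)
    have "ennroot p (\<integral>\<^sup>+ x. ennreal (\<bar>u x\<bar> powr p) \<partial>M) \<le> ennreal a"
      using ab unfolding A_def Epow_def by simp
    hence IA: "(\<integral>\<^sup>+ x. ennreal (\<bar>u x\<bar> powr p) \<partial>M) \<le> ennreal (a powr p)"
      using ab by (simp add: ennroot_le_iff[OF p0] epow_ennreal)
    have "ennroot p (\<integral>\<^sup>+ x. ennreal (\<bar>v x\<bar> powr p) \<partial>M) \<le> ennreal b"
      using ab unfolding B_def Epow_def by simp
    hence IB: "(\<integral>\<^sup>+ x. ennreal (\<bar>v x\<bar> powr p) \<partial>M) \<le> ennreal (b powr p)"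
      using ab by (simp add: ennroot_le_iff[OF p0] epow_ennreal)
    have key: "ennroot p I \<le> ennreal (a + b) + ennreal e" if e: "e > 0" for e
    proof -
      define a' where "a' = a + e/2"
      define b' where "b' = b + e/2"
      define l where "l = a' / (a' + b')"
      have a'b': "a' > 0" "b' > 0" using ab e by (auto simp: a'_def b'_def)
      have l: "0 < l" "l < 1" using a'b' by (auto simp: l_def field_simps)
      have 1: "1 - l = b' / (b' + a')" using a'b' by (simp add: l_def field_simps)
      have "I \<le> (\<integral>\<^sup>+ x. ennreal (l powr (1-p)) * ennreal (\<bar>u x\<bar> powr p) + ennreal ((1-l) powr (1-p)) * ennreal (\<bar>v x\<bar> powr p) \<partial>M)"
        unfolding I_def
      proof (intro nn_integral_mono)
        fix x
        have "\<bar>u x + v x\<bar> powr p \<le> l powr (1-p) * \<bar>u x\<bar> powr p + (1-l) powr (1-p) * \<bar>v x\<bar> powr p"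
          using pointwise_convex[OF u0[of x] v0[of x] l p] u0[of x] v0[of x] by simp
        then show "ennreal (\<bar>u x + v x\<bar> powr p) \<le> ennreal (l powr (1-p)) * ennreal (\<bar>u x\<bar> powr p) + ennreal ((1-l) powr (1-p)) * ennreal (\<bar>v x\<bar> powr p)"
          by (simp add: ennreal_mult[symmetric] ennreal_plus[symmetric] del: ennreal_plus)
      qed
      also have "\<dots> = ennreal (l powr (1-p)) * (\<integral>\<^sup>+ x. ennreal (\<bar>u x\<bar> powr p) \<partial>M) + ennreal ((1-l) powr (1-p)) * (\<integral>\<^sup>+ x. ennreal (\<bar>v x\<bar> powr p) \<partial>M)"
        using um vm by (simp add: nn_integral_add nn_integral_cmult)
      also have "\<dots> \<le> ennreal (l powr (1-p)) * ennreal (a' powr p) + ennreal ((1-l) powr (1-p)) * ennreal (b' powr p)"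
      proof (intro add_mono mult_left_mono)
        show "(\<integral>\<^sup>+ x. ennreal (\<bar>u x\<bar> powr p) \<partial>M) \<le> ennreal (a' powr p)"
          using IA ab(3) e p0 by (auto simp: a'_def intro!: powr_mono2 order.trans[OF IA])
        show "(\<integral>\<^sup>+ x. ennreal (\<bar>v x\<bar> powr p) \<partial>M) \<le> ennreal (b' powr p)"
          using IB ab(4) e p0 by (auto simp: b'_def intro!: powr_mono2 order.trans[OF IB])
      qed auto
      also have "\<dots> = ennreal (a' * (a'+b') powr (p-1) + b' * (b'+a') powr (p-1))"
        using alg1[OF a'b', of p] alg1[OF a'b'(2,1), of p] 1
        by (simp add: l_def ennreal_mult[symmetric] ennreal_plus[symmetric] del: ennreal_plus)
           (subst ennreal_plus[symmetric]; use a'b' in auto)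
      also have "\<dots> = ennreal ((a'+b') powr p)"
      proof -
        have "a' * (a'+b') powr (p-1) + b' * (b'+a') powr (p-1) = (a'+b') powr 1 * (a'+b') powr (p-1)"
          using a'b' by (simp add: add.commute distrib_right)
        also have "\<dots> = (a'+b') powr (1 + (p - 1))" by (simp only: powr_add)
        also have "\<dots> = (a'+b') powr p" by simp
        finally show ?thesis by simp
      qed
      also have "\<dots> = epow p (ennreal (a + b + e))"
        using a'b' ab e by (simp add: epow_ennreal a'_def b'_def max_def algebra_simps del: ennreal_plus)
      finally have "ennroot p I \<le> ennreal (a + b + e)" by (simp add: ennroot_le_iff[OF p0])
      then show ?thesis using ab e by (simp add: ennreal_plus[symmetric] del: ennreal_plus)
    qed
    have "ennroot p I \<le> ennreal (a + b)"
      by (rule ennreal_le_epsilon) (use key in auto)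
    then show ?thesis using ab unfolding A_def B_def I_def Epow_def
      by (simp add: ennreal_plus[symmetric] del: ennreal_plus)
  qed
qed




lemma lsc_approx:
  fixes f :: "'a::metric_space \<Rightarrow> real"
  assumes lsc: "lsc f" and f0: "\<And>x. 0 \<le> f x"
  shows "\<exists>\<phi>. (\<forall>n. \<phi> n \<in> Cb) \<and> (\<forall>n x. 0 \<le> \<phi> n x \<and> \<phi> n x \<le> f x) \<and>
             (\<forall>x. incseq (\<lambda>n. \<phi> n x)) \<and> (\<forall>x. (\<lambda>n. \<phi> n x) \<longlonglongrightarrow> f x)"
proof -
  define \<psi> where "\<psi> n x = (INF y. f y + real n * dist x y)" for n x
  have bdd: "bdd_below (range (\<lambda>y. f y + real n * dist x y))" for n x
    by (rule bdd_belowI[of _ 0]) (auto intro: add_nonneg_nonneg f0)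
  have psi_le: "\<psi> n x \<le> f y + real n * dist x y" for n x y
    unfolding \<psi>_def by (rule cINF_lower[OF bdd]) simp
  have psi_f: "\<psi> n x \<le> f x" for n x using psi_le[of n x x] by simp
  have psi_ge: "a \<le> \<psi> n x" if "\<And>y. a \<le> f y + real n * dist x y" for a n x
    unfolding \<psi>_def by (rule cINF_greatest) (use that in auto)
  have psi0: "0 \<le> \<psi> n x" for n x by (rule psi_ge) (auto intro: add_nonneg_nonneg f0)
  have psi_mono: "\<psi> n x \<le> \<psi> (Suc n) x" for n x
  proof (rule psi_ge)
    fix y show "\<psi> n x \<le> f y + real (Suc n) * dist x y"
      using psi_le[of n x y] by (smt (verit) mult_right_mono of_nat_le_iff le_Suc_eq zero_le_dist)
  qed
  have lip: "\<psi> n x \<le> \<psi> n x' + real n * dist x x'" for n x x'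
  proof -
    have "\<psi> n x - real n * dist x x' \<le> \<psi> n x'"
    proof (rule psi_ge)
      fix y
      have "\<psi> n x \<le> f y + real n * dist x y" by (rule psi_le)
      also have "\<dots> \<le> f y + real n * (dist x' y + dist x x')"
        by (intro add_left_mono mult_left_mono) (use dist_triangle[of x y x'] in \<open>auto simp: dist_commute\<close>)
      finally show "\<psi> n x - real n * dist x x' \<le> f y + real n * dist x' y"
        by (simp add: algebra_simps)
    qed
    then show ?thesis by simp
  qed
  have cont: "continuous_on UNIV (\<psi> n)" for n
  proof (rule lipschitz_on_continuous_on[of "real n"], rule lipschitz_onI)
    fix x y :: 'a
    show "dist (\<psi> n x) (\<psi> n y) \<le> real n * dist x y"
      using lip[of n x y] lip[of n y x] by (simp add: dist_real_def dist_commute abs_le_iff)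
  qed simp
  define \<phi> where "\<phi> n x = min (real n) (\<psi> n x)" for n x
  have Cb: "\<phi> n \<in> Cb" for n
  proof -
    have "continuous_on UNIV (\<phi> n)" unfolding \<phi>_def
      by (intro continuous_on_min continuous_on_const cont)
    moreover have "bounded (range (\<phi> n))"
      unfolding bounded_real using psi0 by (auto simp: \<phi>_def intro!: exI[of _ "real n"])
    ultimately show ?thesis by (simp add: Cb_def)
  qed
  have bnd: "0 \<le> \<phi> n x \<and> \<phi> n x \<le> f x" for n x
    using psi0[of n x] psi_f[of n x] by (auto simp: \<phi>_def)
  have inc: "incseq (\<lambda>n. \<phi> n x)" for x
    by (rule incseq_SucI) (use psi_mono in \<open>auto simp: \<phi>_def min_le_iff_disj intro: order.trans\<close>)
  have lim: "(\<lambda>n. \<phi> n x) \<longlonglongrightarrow> f x" for x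
  proof (rule order_tendstoI)
    fix a assume "f x < a"
    then show "\<forall>\<^sub>F n in sequentially. \<phi> n x < a"
      by (intro always_eventually allI) (meson bnd le_less_trans \<open>f x < a\<close>)
  next
    fix a assume a: "a < f x"
    define a' where "a' = (a + f x) / 2"
    have a': "a < a'" "a' < f x" using a by (auto simp: a'_def)
    have "open {z. a' < f z}" using lsc by (simp add: lsc_def)
    moreover have "x \<in> {z. a' < f z}" using a' by simp
    ultimately obtain r where r: "r > 0" "ball x r \<subseteq> {z. a' < f z}"
      by (meson openE)
    obtain N :: nat where N: "max a' (a' / r) < real N" using reals_Archimedean2 by blast
    show "\<forall>\<^sub>F n in sequentially. a < \<phi> n x"
    proof (rule eventually_sequentiallyI[of N])
      fix n assume n: "N \<le> n"
      have nN: "real N \<le> real n" using n by simp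
      have "a' \<le> \<psi> n x"
      proof (rule psi_ge)
        fix y
        show "a' \<le> f y + real n * dist x y"
        proof (cases "dist x y < r")
          case True
          then have "a' < f y" using r by auto
          then show ?thesis by (smt (verit) zero_le_dist mult_nonneg_nonneg of_nat_0_le_iff)
        next
          case False
          have "a' < real N * r" using N r by (simp add: field_simps)
          also have "\<dots> \<le> real n * dist x y" using False nN r by (intro mult_mono) auto
          finally show ?thesis using f0[of y] by simp
        qed
      qed
      moreover have "a' < real n" using N nN by simp
      ultimately show "a < \<phi> n x" using a' by (simp add: \<phi>_def)
    qed
  qed
  show ?thesis using Cb bnd inc lim by blast
qed

lemma Cb_measurable:
  assumes "\<phi> \<in> Cb" "sets M = sets borel"
  shows "\<phi> \<in> borel_measurable M"
proof -
  have "continuous_on UNIV \<phi>" using assms(1) by (simp add: Cb_def)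
  then have "\<phi> \<in> borel_measurable borel" by (rule borel_measurable_continuous_onI)
  then show ?thesis by (simp add: measurable_cong_sets[OF assms(2) refl])
qed

lemma cap_lsc_eq:
  fixes f :: "'a::metric_space \<Rightarrow> real"
  assumes p: "p \<ge> 1" and R: "\<And>M. M \<in> R \<Longrightarrow> sets M = sets borel"
    and lsc: "lsc f" and f0: "\<And>x. 0 \<le> f x"
  shows "cap_lsc p R f = (SUP M\<in>R. Epow p M f)"
proof (rule antisym)
  have p0: "p > 0" using p by simp
  show "cap_lsc p R f \<le> (SUP M\<in>R. Epow p M f)"
    unfolding cap_lsc_def cap_Cb_def
    by (intro SUP_least SUP_mono' Epow_mono p0) (auto intro: f0 order.trans)
  show "(SUP M\<in>R. Epow p M f) \<le> cap_lsc p R f"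
  proof (rule SUP_least)
    fix M assume M: "M \<in> R"
    obtain \<phi> where \<phi>: "\<And>n. \<phi> n \<in> Cb" "\<And>n x. 0 \<le> \<phi> n x \<and> \<phi> n x \<le> f x"
      "\<And>x. incseq (\<lambda>n. \<phi> n x)" "\<And>x. (\<lambda>n. \<phi> n x) \<longlonglongrightarrow> f x"
      using lsc_approx[OF lsc f0] by blast
    have meas: "(\<lambda>x. ennreal (\<bar>\<phi> n x\<bar> powr p)) \<in> borel_measurable M" for n
    proof -
      have "\<phi> n \<in> borel_measurable M" by (rule Cb_measurable[OF \<phi>(1) R[OF M]])
      then show ?thesis by measurable
    qed
    have inc: "incseq (\<lambda>n x. ennreal (\<bar>\<phi> n x\<bar> powr p))"
    proof (rule incseq_SucI, rule le_funI)
      fix n x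
      have "\<phi> n x \<le> \<phi> (Suc n) x" using \<phi>(3)[of x] by (simp add: incseq_Suc_iff)
      then show "ennreal (\<bar>\<phi> n x\<bar> powr p) \<le> ennreal (\<bar>\<phi> (Suc n) x\<bar> powr p)"
        using \<phi>(2)[of n x] p0 by (intro ennreal_leI powr_mono2) auto
    qed
    have pt: "(SUP n. ennreal (\<bar>\<phi> n x\<bar> powr p)) = ennreal (\<bar>f x\<bar> powr p)" for x
    proof (rule LIMSEQ_unique)
      have "incseq (\<lambda>n. ennreal (\<bar>\<phi> n x\<bar> powr p))"
        using inc by (auto simp: incseq_def le_fun_def)
      then show "(\<lambda>n. ennreal (\<bar>\<phi> n x\<bar> powr p)) \<longlonglongrightarrow> (SUP n. ennreal (\<bar>\<phi> n x\<bar> powr p))"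
        by (rule LIMSEQ_SUP)
      show "(\<lambda>n. ennreal (\<bar>\<phi> n x\<bar> powr p)) \<longlonglongrightarrow> ennreal (\<bar>f x\<bar> powr p)"
        using p0 by (intro tendsto_ennrealI tendsto_powr' tendsto_rabs \<phi>(4)) auto
    qed
    have "Epow p M f = ennroot p (\<integral>\<^sup>+ x. (SUP n. ennreal (\<bar>\<phi> n x\<bar> powr p)) \<partial>M)"
      unfolding Epow_def pt ..
    also have "\<dots> = ennroot p (SUP n. \<integral>\<^sup>+ x. ennreal (\<bar>\<phi> n x\<bar> powr p) \<partial>M)"
      by (simp add: nn_integral_monotone_convergence_SUP[OF inc meas])
    also have "\<dots> = (SUP n. Epow p M (\<phi> n))"
      unfolding ennroot_SUP[OF p0] Epow_def ..
    also have "\<dots> \<le> cap_lsc p R f"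
    proof (rule SUP_least)
      fix n
      have "Epow p M (\<phi> n) \<le> cap_Cb p R (\<phi> n)"
        unfolding cap_Cb_def using M by (rule SUP_upper)
      also have "\<dots> \<le> cap_lsc p R f"
        unfolding cap_lsc_def using \<phi>(1,2) by (intro SUP_upper) auto
      finally show "Epow p M (\<phi> n) \<le> cap_lsc p R f" .
    qed
    finally show "Epow p M f \<le> cap_lsc p R f" .
  qed
qed




lemma lsc_borel:
  assumes "lsc g" "sets M = sets borel"
  shows "g \<in> borel_measurable M"
proof -
  have "g \<in> borel_measurable borel"
    unfolding borel_measurable_iff_greater using assms(1) by (auto simp: lsc_def)
  then show ?thesis by (simp add: measurable_cong_sets[OF assms(2) refl])
qed

lemma lsc_add_cont:
  fixes c g :: "'a::topological_space \<Rightarrow> real"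
  assumes c: "continuous_on UNIV c" and g: "lsc g"
  shows "lsc (\<lambda>x. c x + g x)"
  unfolding lsc_def
proof
  fix t
  have eq: "{x. t < c x + g x} = (\<Union>s. {x. t - s < c x} \<inter> {x. s < g x})"
  proof (safe)
    fix x assume "t < c x + g x"
    then show "x \<in> (\<Union>s. {x. t - s < c x} \<inter> {x. s < g x})"
      by (intro UN_I[of "g x - (c x + g x - t)/2"]) (auto simp: field_simps)
  qed auto
  show "open {x. t < c x + g x}"
    unfolding eq
  proof (intro open_UN ballI open_Int)
    fix s
    show "open {x. t - s < c x}" by (intro open_Collect_less continuous_on_const c)
    show "open {x. s < g x}" using g by (simp add: lsc_def)
  qed
qed

lemma Cb_powr:
  assumes "\<phi> \<in> Cb" "p > 0"
  shows "(\<lambda>x. \<bar>\<phi> x\<bar> powr p) \<in> Cb"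
proof -
  have c: "continuous_on UNIV \<phi>" and b: "bounded (range \<phi>)" using assms by (auto simp: Cb_def)
  have "continuous_on UNIV (\<lambda>x. \<bar>\<phi> x\<bar> powr p)"
    using assms(2) by (intro continuous_on_powr' continuous_on_rabs c continuous_on_const) auto
  moreover obtain B where B: "\<And>x. \<bar>\<phi> x\<bar> \<le> B" using b unfolding bounded_real by auto
  have "bounded (range (\<lambda>x. \<bar>\<phi> x\<bar> powr p))"
    unfolding bounded_real using B assms(2) by (auto intro!: exI[of _ "B powr p"] powr_mono2)
  ultimately show ?thesis by (simp add: Cb_def)
qed

lemma Epow_Cb:
  assumes "\<phi> \<in> Cb" "p > 0" "M \<in> borel_prob_measures"
  shows "Epow p M \<phi> = ennroot p (ennreal (integral\<^sup>L M (\<lambda>x. \<bar>\<phi> x\<bar> powr p)))"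
proof -
  interpret prob_space M using assms(3) by (simp add: borel_prob_measures_def)
  have s: "sets M = sets borel" using assms(3) by (simp add: borel_prob_measures_def)
  have g: "(\<lambda>x. \<bar>\<phi> x\<bar> powr p) \<in> Cb" by (rule Cb_powr[OF assms(1,2)])
  then obtain B where B: "\<And>x. \<bar>\<bar>\<phi> x\<bar> powr p\<bar> \<le> B" unfolding Cb_def bounded_real by auto
  have "integrable M (\<lambda>x. \<bar>\<phi> x\<bar> powr p)"
    by (rule integrable_const_bound[where B=B]) (use B Cb_measurable[OF g s] in auto)
  then show ?thesis unfolding Epow_def by (subst nn_integral_eq_integral) auto
qed

lemma cap_lower:
  fixes X :: "'a::metric_space \<Rightarrow> real"
  assumes p: "p \<ge> 1" and R: "\<And>M. M \<in> R \<Longrightarrow> sets M = sets borel" and M: "M \<in> R"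
  shows "Epow p M X \<le> cap p R X"
  unfolding cap_def
proof (rule INF_greatest)
  fix f assume f: "f \<in> {f. lsc f \<and> (\<forall>x. \<bar>X x\<bar> \<le> f x)}"
  have f0: "0 \<le> f x" for x
  proof -
    have "\<bar>X x\<bar> \<le> f x" using f by auto
    then show ?thesis by (rule order.trans[OF abs_ge_zero])
  qed
  have "Epow p M X \<le> Epow p M f" using p
    by (intro Epow_mono) (use f in \<open>auto intro: order.trans[OF _ abs_ge_self]\<close>)
  also have "\<dots> \<le> (SUP M\<in>R. Epow p M f)" using M by (rule SUP_upper)
  also have "\<dots> = cap_lsc p R f" using cap_lsc_eq[OF p R _ f0] f by auto
  finally show "Epow p M X \<le> cap_lsc p R f" .
qed

lemma main_from_Q:
  fixes \<P> :: "'a::metric_space measure set"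
  assumes P: "\<P> \<subseteq> borel_prob_measures" and Q: "\<Q> \<subseteq> \<P>"
    and dense: "\<And>g M t. g \<in> Cb \<Longrightarrow> M \<in> \<P> \<Longrightarrow> t < integral\<^sup>L M g \<Longrightarrow> \<exists>N\<in>\<Q>. t < integral\<^sup>L N g"
    and p: "p \<ge> 1"
  shows "(\<forall>X\<in>L1_set p \<P>. cap p \<P> X = (SUP Pn\<in>\<Q>. Epow p Pn X))
              \<and> cap p \<P> = cap p \<Q> \<and> L1_set p \<P> = L1_set p \<Q>"
proof -
  have p0: "p > 0" using p by simp
  have setsP: "\<And>M. M \<in> \<P> \<Longrightarrow> sets M = sets borel" using P by (auto simp: borel_prob_measures_def)
  have CbEq: "cap_Cb p \<P> \<phi> = cap_Cb p \<Q> \<phi>" if \<phi>: "\<phi> \<in> Cb" for \<phi>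
  proof (rule antisym)
    show "cap_Cb p \<Q> \<phi> \<le> cap_Cb p \<P> \<phi>" unfolding cap_Cb_def using Q by (rule SUP_subset_mono) simp
    show "cap_Cb p \<P> \<phi> \<le> cap_Cb p \<Q> \<phi>" unfolding cap_Cb_def
    proof (rule SUP_least, rule ccontr)
      fix M assume M: "M \<in> \<P>"
      define S where "S = (SUP N\<in>\<Q>. Epow p N \<phi>)"
      assume nle: "\<not> Epow p M \<phi> \<le> S"
      then have "S \<noteq> \<top>" by auto
      then obtain s where s: "S = ennreal s" "s \<ge> 0" by (cases S) auto
      define g where "g = (\<lambda>x. \<bar>\<phi> x\<bar> powr p)"
      have g: "g \<in> Cb" unfolding g_def by (rule Cb_powr[OF \<phi> p0])
      have MB: "M \<in> borel_prob_measures" using M P by auto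
      have "\<not> ennreal (integral\<^sup>L M g) \<le> ennreal (s powr p)"
        using nle s unfolding Epow_Cb[OF \<phi> p0 MB] g_def
        by (auto simp: ennroot_le_iff[OF p0] epow_ennreal max_def)
      then have "s powr p < integral\<^sup>L M g"
        by (meson ennreal_leI not_le_imp_less)
      then obtain N where N: "N \<in> \<Q>" "s powr p < integral\<^sup>L N g" using dense[OF g M] by blast
      then have "\<not> ennreal (integral\<^sup>L N g) \<le> ennreal (s powr p)"
        by (simp add: ennreal_le_iff not_le)
      have NB: "N \<in> borel_prob_measures" using N Q P by auto
      have "\<not> Epow p N \<phi> \<le> S"
        using \<open>\<not> ennreal (integral\<^sup>L N g) \<le> ennreal (s powr p)\<close> s unfolding Epow_Cb[OF \<phi> p0 NB] g_def
        by (auto simp: ennroot_le_iff[OF p0] epow_ennreal max_def)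
      moreover have "Epow p N \<phi> \<le> S" unfolding S_def using N(1) by (rule SUP_upper)
      ultimately show False by simp
    qed
  qed
  have lscEq: "cap_lsc p \<P> = cap_lsc p \<Q>"
    by (rule ext) (auto simp: cap_lsc_def CbEq intro!: SUP_cong)
  have capEq: "cap p \<P> = cap p \<Q>"
    by (rule ext) (simp add: cap_def lscEq)
  have L1Eq: "L1_set p \<P> = L1_set p \<Q>"
    by (simp add: L1_set_def capEq)
  have part1: "cap p \<P> X = (SUP Pn\<in>\<Q>. Epow p Pn X)" if X: "X \<in> L1_set p \<P>" for X
  proof (rule antisym)
    show "(SUP Pn\<in>\<Q>. Epow p Pn X) \<le> cap p \<P> X"
      using Q by (intro SUP_least cap_lower[OF p setsP]) auto
    define S where "S = (SUP Pn\<in>\<Q>. Epow p Pn X)"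
    show "cap p \<P> X \<le> S"
    proof (rule ennreal_le_epsilon)
      fix e :: real assume e: "0 < e"
      define e' where "e' = e/2"
      have e': "e' > 0" using e by (simp add: e'_def)
      obtain \<phi> where \<phi>: "\<phi> \<in> Cb" "cap p \<P> (\<lambda>x. X x - \<phi> x) < ennreal e'"
      proof -
        have "ennreal e' > 0" using e' by simp
        moreover have "\<forall>e>0. \<exists>\<phi>\<in>Cb. cap p \<P> (\<lambda>x. X x - \<phi> x) < e" using X unfolding L1_set_def by blast
        ultimately show ?thesis using that by blast
      qed
      then obtain g where g: "lsc g" "\<And>x. \<bar>X x - \<phi> x\<bar> \<le> g x" "cap_lsc p \<P> g < ennreal e'"
        unfolding cap_def by (auto simp: INF_less_iff)
      have g0: "0 \<le> g x" for x by (rule order.trans[OF abs_ge_zero g(2)])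
      have gsmall: "Epow p M g \<le> ennreal e'" if "M \<in> \<P>" for M
      proof -
        have "Epow p M g \<le> (SUP M\<in>\<P>. Epow p M g)" using that by (rule SUP_upper)
        also have "\<dots> = cap_lsc p \<P> g" using cap_lsc_eq[OF p setsP g(1) g0] by simp
        finally show ?thesis using g(3) by simp
      qed
      have cphi: "continuous_on UNIV \<phi>" using \<phi>(1) by (simp add: Cb_def)
      define f where "f = (\<lambda>x. \<bar>\<phi> x\<bar> + g x)"
      have flsc: "lsc f" unfolding f_def by (intro lsc_add_cont continuous_on_rabs cphi g(1))
      have fX: "\<bar>X x\<bar> \<le> f x" for x using g(2)[of x] by (simp add: f_def)
      have "cap p \<P> X \<le> cap_lsc p \<P> f" unfolding cap_def using flsc fX by (intro INF_lower) auto
      also have "\<dots> = (SUP M\<in>\<P>. Epow p M f)"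
        using cap_lsc_eq[OF p setsP flsc] g0 by (simp add: f_def add_nonneg_nonneg)
      also have "\<dots> \<le> S + ennreal e"
      proof (rule SUP_least)
        fix M assume M: "M \<in> \<P>"
        have mphi: "(\<lambda>x. \<bar>\<phi> x\<bar>) \<in> borel_measurable M"
          using Cb_measurable[OF \<phi>(1) setsP[OF M]] by measurable
        have mg: "g \<in> borel_measurable M" by (rule lsc_borel[OF g(1) setsP[OF M]])
        have "Epow p M f \<le> Epow p M (\<lambda>x. \<bar>\<phi> x\<bar>) + Epow p M g"
          unfolding f_def by (rule minkowski[OF p mphi mg]) (auto simp: g0)
        also have "Epow p M (\<lambda>x. \<bar>\<phi> x\<bar>) = Epow p M \<phi>" by (simp add: Epow_def)
        also have "Epow p M \<phi> \<le> cap_Cb p \<P> \<phi>" unfolding cap_Cb_def using M by (rule SUP_upper)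
        also have "\<dots> = cap_Cb p \<Q> \<phi>" by (rule CbEq[OF \<phi>(1)])
        also have "\<dots> \<le> S + ennreal e'"
          unfolding cap_Cb_def
        proof (rule SUP_least)
          fix N assume N: "N \<in> \<Q>"
          then have NP: "N \<in> \<P>" using Q by auto
          have mphi': "(\<lambda>x. max 0 (\<bar>\<phi> x\<bar> - g x)) \<in> borel_measurable N"
            using Cb_measurable[OF \<phi>(1) setsP[OF NP]] lsc_borel[OF g(1) setsP[OF NP]] by measurable
          have mg': "g \<in> borel_measurable N" by (rule lsc_borel[OF g(1) setsP[OF NP]])
          have "Epow p N \<phi> \<le> Epow p N (\<lambda>x. max 0 (\<bar>\<phi> x\<bar> - g x) + g x)"
            using p0 g0 by (intro Epow_mono) auto
          also have "\<dots> \<le> Epow p N (\<lambda>x. max 0 (\<bar>\<phi> x\<bar> - g x)) + Epow p N g"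
            by (rule minkowski[OF p mphi' mg']) (auto simp: g0)
          also have "\<dots> \<le> Epow p N X + ennreal e'"
          proof (intro add_mono gsmall[OF NP] Epow_mono p0)
            fix x show "\<bar>max 0 (\<bar>\<phi> x\<bar> - g x)\<bar> \<le> \<bar>X x\<bar>"
              using g(2)[of x] g0[of x] by auto
          qed
          also have "\<dots> \<le> S + ennreal e'" unfolding S_def using N by (intro add_mono SUP_upper) auto
          finally show "Epow p N \<phi> \<le> S + ennreal e'" .
        qed
        finally have "Epow p M f \<le> S + ennreal e' + Epow p M g" by (simp add: add_right_mono)
        also have "\<dots> \<le> S + ennreal e' + ennreal e'" by (intro add_left_mono gsmall[OF M])
        also have "\<dots> = S + ennreal e" using e' by (simp add: e'_def add.assoc ennreal_plus[symmetric] del: ennreal_plus)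
        finally show "Epow p M f \<le> S + ennreal e" .
      qed
      finally show "cap p \<P> X \<le> S + ennreal e" .
    qed
  qed
  show ?thesis using part1 capEq L1Eq by blast
qed




definition hfun :: "'a::metric_space set \<Rightarrow> nat \<Rightarrow> 'a \<Rightarrow> real" where
  "hfun U k x = min 1 (real k * infdist x (- U))"

lemma hfun_Cb: "hfun U k \<in> Cb"
proof -
  have "continuous_on UNIV (hfun U k)" unfolding hfun_def
    by (intro continuous_on_min continuous_on_const continuous_on_mult continuous_on_infdist continuous_on_id)
  moreover have "bounded (range (hfun U k))"
    unfolding bounded_real hfun_def by (auto intro!: exI[of _ 1] simp: infdist_nonneg)
  ultimately show ?thesis by (simp add: Cb_def)
qed

lemma hfun_nonneg: "0 \<le> hfun U k x" by (simp add: hfun_def infdist_nonneg)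
lemma hfun_le1: "hfun U k x \<le> 1" by (simp add: hfun_def)

lemma Epow_integral_bpm:
  assumes "\<phi> \<in> Cb" "M \<in> borel_prob_measures" "\<And>x. \<phi> x \<ge> 0"
  shows "(\<integral>\<^sup>+ x. ennreal (\<phi> x) \<partial>M) = ennreal (integral\<^sup>L M \<phi>)"
proof -
  interpret prob_space M using assms(2) by (simp add: borel_prob_measures_def)
  have s: "sets M = sets borel" using assms(2) by (simp add: borel_prob_measures_def)
  obtain B where B: "\<And>x. \<bar>\<phi> x\<bar> \<le> B" using assms(1) unfolding Cb_def bounded_real by auto
  have "integrable M \<phi>"
    by (rule integrable_const_bound[where B=B]) (use B Cb_measurable[OF assms(1) s] in auto)
  then show ?thesis using assms(3) by (subst nn_integral_eq_integral) auto
qed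

lemma emeasure_hfun:
  assumes M: "M \<in> borel_prob_measures" and U: "open U" "U \<noteq> UNIV"
  shows "emeasure M U = (SUP k. ennreal (integral\<^sup>L M (hfun U k)))"
proof -
  have s: "sets M = sets borel" using M by (simp add: borel_prob_measures_def)
  have Us: "U \<in> sets M" using U s by simp
  have pt: "(SUP k. ennreal (hfun U k x)) = indicator U x" for x
  proof (cases "x \<in> U")
    case True
    have "infdist x (- U) > 0"
      using U True by (intro infdist_pos_not_in_closed) auto
    then obtain k :: nat where k: "1 / infdist x (- U) < real k" using reals_Archimedean2 by blast
    then have "1 \<le> real k * infdist x (- U)" using \<open>infdist x (- U) > 0\<close> by (simp add: field_simps)
    then have "hfun U k x = 1" by (simp add: hfun_def)
    then have "1 \<le> (SUP k. ennreal (hfun U k x))" by (metis SUP_upper UNIV_I ennreal_1)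
    moreover have "(SUP k. ennreal (hfun U k x)) \<le> 1" by (intro SUP_least) (simp add: hfun_le1)
    ultimately show ?thesis using True by simp
  next
    case False
    then show ?thesis by (simp add: hfun_def)
  qed
  have meas: "(\<lambda>x. ennreal (hfun U k x)) \<in> borel_measurable M" for k
    using Cb_measurable[OF hfun_Cb s] by measurable
  have inc: "incseq (\<lambda>k x. ennreal (hfun U k x))"
  proof (intro incseq_SucI le_funI ennreal_leI)
    fix k x
    have "real k * infdist x (-U) \<le> real (Suc k) * infdist x (-U)"
      by (intro mult_right_mono) (auto simp: infdist_nonneg)
    then show "hfun U k x \<le> hfun U (Suc k) x" unfolding hfun_def by (rule min.mono[OF order_refl])
  qed
  have "emeasure M U = (\<integral>\<^sup>+ x. indicator U x \<partial>M)" using Us by simp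
  also have "\<dots> = (\<integral>\<^sup>+ x. (SUP k. ennreal (hfun U k x)) \<partial>M)" by (simp add: pt)
  also have "\<dots> = (SUP k. \<integral>\<^sup>+ x. ennreal (hfun U k x) \<partial>M)"
    by (rule nn_integral_monotone_convergence_SUP[OF inc meas])
  also have "\<dots> = (SUP k. ennreal (integral\<^sup>L M (hfun U k)))"
    using Epow_integral_bpm[OF hfun_Cb M hfun_nonneg] by simp
  finally show ?thesis .
qed

lemma sep_family:
  obtains d :: "nat \<Rightarrow> 'a::polish_space \<Rightarrow> real"
  where "\<And>n. d n \<in> Cb"
    and "\<And>M N. M \<in> borel_prob_measures \<Longrightarrow> N \<in> borel_prob_measures \<Longrightarrow>
           (\<And>n. integral\<^sup>L M (d n) = integral\<^sup>L N (d n)) \<Longrightarrow> M = N"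
proof -
  obtain B :: "'a set set" where B: "countable B" "topological_basis B"
    using ex_countable_basis by blast
  define E where "E = (\<lambda>F. \<Inter>F) ` {F. finite F \<and> F \<subseteq> B}"
  have Ec: "countable E" unfolding E_def using B(1) by (intro countable_image countable_Collect_finite_subset)
  have UE: "UNIV \<in> E" unfolding E_def by (intro image_eqI[of _ _ "{}"]) auto
  have Eopen: "open U" if "U \<in> E" for U
  proof -
    from that obtain F where F: "finite F" "F \<subseteq> B" "U = \<Inter>F" unfolding E_def by auto
    have "\<forall>T\<in>F. open T" using F(2) topological_basis_open[OF B(2)] by blast
    then show ?thesis using F(1,3) by (simp add: open_Inter)
  qed
  have Eint: "Int_stable E"
  proof (rule Int_stableI)
    fix a b assume "a \<in> E" "b \<in> E"
    then obtain F G where "finite F" "F \<subseteq> B" "a = \<Inter>F" "finite G" "G \<subseteq> B" "b = \<Inter>G"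
      unfolding E_def by auto
    then show "a \<inter> b \<in> E" unfolding E_def by (intro image_eqI[of _ _ "F \<union> G"]) auto
  qed
  have BE: "B \<subseteq> E" unfolding E_def by (auto intro!: image_eqI[of _ _ "{b}" for b])
  have sig: "sets borel = sigma_sets UNIV E"
  proof (rule antisym)
    have "sets borel = sigma_sets UNIV B"
      unfolding borel_eq_countable_basis[OF B] by simp
    also have "\<dots> \<subseteq> sigma_sets UNIV E" using BE by (rule sigma_sets_mono')
    finally show "sets borel \<subseteq> sigma_sets UNIV E" .
    have "E \<subseteq> sets borel" using Eopen by auto
    then show "sigma_sets UNIV E \<subseteq> sets borel" using sigma_sets_le_sets_iff[of borel E] by simp
  qed
  define e where "e = from_nat_into (E \<times> (UNIV :: nat set))"
  have re: "range e = E \<times> UNIV" unfolding e_def using Ec UE by (intro range_from_nat_into) auto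
  define d where "d n = hfun (fst (e n)) (snd (e n))" for n
  show ?thesis
  proof (rule that[of d])
    show "d n \<in> Cb" for n unfolding d_def by (rule hfun_Cb)
    fix M N assume M: "M \<in> borel_prob_measures" and N: "N \<in> borel_prob_measures"
      and eq: "\<And>n. integral\<^sup>L M (d n) = integral\<^sup>L N (d n)"
    have sM: "sets M = sigma_sets UNIV E" and sN: "sets N = sigma_sets UNIV E"
      using M N sig by (auto simp: borel_prob_measures_def)
    have spM: "space M = UNIV" and spN: "space N = UNIV"
      using M N by (auto simp: borel_prob_measures_def dest!: sets_eq_imp_space_eq)
    have hEq: "integral\<^sup>L M (hfun U k) = integral\<^sup>L N (hfun U k)" if "U \<in> E" for U k
    proof -
      have "(U, k) \<in> range e" using re that by auto
      then obtain n where "e n = (U, k)" by auto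
      then show ?thesis using eq[of n] by (simp add: d_def)
    qed
    show "M = N"
    proof (rule measure_eqI_generator_eq_countable[OF Eint _ _ sM sN, of "{UNIV}"])
      show "E \<subseteq> Pow UNIV" by simp
      fix X assume X: "X \<in> E"
      show "emeasure M X = emeasure N X"
      proof (cases "X = UNIV")
        case True
        have "prob_space M" "prob_space N" using M N by (auto simp: borel_prob_measures_def)
        then show ?thesis using True spM spN by (metis prob_space.emeasure_space_1)
      next
        case False
        then show ?thesis using emeasure_hfun[OF M Eopen[OF X] False] emeasure_hfun[OF N Eopen[OF X] False]
          hEq[OF X] by simp
      qed
    next
      show "{UNIV} \<subseteq> E" using UE by simp
    next
      have "prob_space M" using M by (auto simp: borel_prob_measures_def)
      then show "\<And>a. a \<in> {UNIV} \<Longrightarrow> emeasure M a \<noteq> \<infinity>"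
      proof -
        fix a :: "'a set" assume "a \<in> {UNIV}"
        then have "a = space M" using spM by simp
        then show "emeasure M a \<noteq> \<infinity>" using prob_space.emeasure_space_1[OF \<open>prob_space M\<close>] by simp
      qed
    qed simp_all
  qed
qed




lemma topspace_weak: "topspace weak_topology = borel_prob_measures"
  unfolding weak_topology_def topspace_pullback_topology by (auto simp: PiE_def)

lemma weak_cont:
  assumes g: "g \<in> Cb"
  shows "continuous_map weak_topology euclideanreal (\<lambda>M. integral\<^sup>L M g)"
proof -
  have "continuous_map weak_topology euclideanreal ((\<lambda>y. y g) \<circ> (\<lambda>M. \<lambda>f\<in>Cb. integral\<^sup>L M f))"
    unfolding weak_topology_def
    by (rule continuous_map_pullback) (rule continuous_map_product_projection[OF g])
  moreover have "((\<lambda>y. y g) \<circ> (\<lambda>M. \<lambda>f\<in>Cb. integral\<^sup>L M f)) = (\<lambda>M. integral\<^sup>L M g)"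
    using g by (auto simp: fun_eq_iff)
  ultimately show ?thesis by simp
qed

lemma exists_Q:
  fixes \<P> :: "'a::polish_space measure set"
  assumes P: "\<P> \<subseteq> borel_prob_measures" and wc: "weakly_rel_compact \<P>"
  shows "\<exists>\<Q>. countable \<Q> \<and> \<Q> \<subseteq> \<P> \<and>
     (\<forall>g M t. g \<in> Cb \<longrightarrow> M \<in> \<P> \<longrightarrow> t < integral\<^sup>L M g \<longrightarrow> (\<exists>N\<in>\<Q>. t < integral\<^sup>L N g))"
proof -
  obtain d :: "nat \<Rightarrow> 'a \<Rightarrow> real" where d: "\<And>n. d n \<in> Cb"
    and dinj: "\<And>M N. M \<in> borel_prob_measures \<Longrightarrow> N \<in> borel_prob_measures \<Longrightarrow>
           (\<And>n. integral\<^sup>L M (d n) = integral\<^sup>L N (d n)) \<Longrightarrow> M = N"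
    using sep_family by blast
  define F where "F M = (\<lambda>n. integral\<^sup>L M (d n))" for M :: "'a measure"
  have Fcont: "continuous_map weak_topology euclidean F"
    unfolding euclidean_product_topology[symmetric] continuous_map_componentwise_UNIV F_def
    using weak_cont[OF d] by simp
  have Finj: "M = N" if "M \<in> borel_prob_measures" "N \<in> borel_prob_measures" "F M = F N" for M N
  proof (rule dinj[OF that(1,2)])
    fix n show "integral\<^sup>L M (d n) = integral\<^sup>L N (d n)" using fun_cong[OF that(3), of n] by (simp add: F_def)
  qed
  obtain BB :: "(nat \<Rightarrow> real) set set" where BB: "countable BB" "topological_basis BB"
    using ex_countable_basis by blast
  define T where "T = (\<lambda>b. SOME t. t \<in> F ` \<P> \<inter> b) ` {b \<in> BB. F ` \<P> \<inter> b \<noteq> {}}"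
  have Tc: "countable T" unfolding T_def using BB(1) by simp
  have some_in: "(SOME t. t \<in> F ` \<P> \<inter> b) \<in> F ` \<P> \<inter> b" if "F ` \<P> \<inter> b \<noteq> {}" for b
  proof -
    from that obtain x where "x \<in> F ` \<P> \<inter> b" by blast
    then show ?thesis by (rule someI[where P="\<lambda>t. t \<in> F ` \<P> \<inter> b"])
  qed
  have TP: "T \<subseteq> F ` \<P>" unfolding T_def using some_in by blast
  have Tdense: "V \<inter> T \<noteq> {}" if Vs: "open V" "s \<in> V" "s \<in> F ` \<P>" for V s
  proof -
    obtain b where b: "b \<in> BB" "s \<in> b" "b \<subseteq> V" using topological_basisE[OF BB(2) Vs(1,2)] by blast
    then have ne: "F ` \<P> \<inter> b \<noteq> {}" using Vs(3) by auto
    then have "(SOME t. t \<in> F ` \<P> \<inter> b) \<in> F ` \<P> \<inter> b" by (rule some_in)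
    moreover have "(SOME t. t \<in> F ` \<P> \<inter> b) \<in> T" unfolding T_def using b(1) ne by auto
    ultimately show ?thesis using b(3) by auto
  qed
  define Q where "Q = (\<lambda>t. SOME M. M \<in> \<P> \<and> F M = t) ` T"
  have Qsome: "(SOME M. M \<in> \<P> \<and> F M = t) \<in> \<P> \<and> F (SOME M. M \<in> \<P> \<and> F M = t) = t" if "t \<in> T" for t
  proof -
    from that TP obtain M where "M \<in> \<P> \<and> F M = t" by auto
    then show ?thesis by (rule someI[where P="\<lambda>M. M \<in> \<P> \<and> F M = t"])
  qed
  have Qc: "countable Q" unfolding Q_def using Tc by simp
  have QP: "Q \<subseteq> \<P>" unfolding Q_def using Qsome by auto
  have "F ` Q = (\<lambda>t. t) ` T" unfolding Q_def image_image by (rule image_cong) (use Qsome in auto)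
  then have FQ: "F ` Q = T" by simp
  have main: "\<exists>N\<in>Q. t < integral\<^sup>L N g" if g: "g \<in> Cb" and M: "M \<in> \<P>" and t: "t < integral\<^sup>L M g" for g M t
  proof (rule ccontr)
    assume "\<not> (\<exists>N\<in>Q. t < integral\<^sup>L N g)"
    then have Qle: "\<And>N. N \<in> Q \<Longrightarrow> integral\<^sup>L N g \<le> t" by (auto simp: not_less)
    define K where "K = weak_topology closure_of \<P>"
    have cK: "compactin weak_topology K" using wc by (simp add: K_def weakly_rel_compact_def)
    have PK: "\<P> \<subseteq> K" unfolding K_def using P by (intro closure_of_subset) (simp add: topspace_weak)
    define C where "C = K \<inter> {N \<in> topspace weak_topology. integral\<^sup>L N g \<in> {..t}}"
    have clC: "closedin weak_topology C" unfolding C_def K_def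
      by (intro closedin_Int closedin_closure_of closedin_continuous_map_preimage[OF weak_cont[OF g]]) auto
    have cC: "compactin weak_topology C" by (rule closed_compactin[OF cK _ clC]) (auto simp: C_def)
    have "compactin euclidean (F ` C)" by (rule image_compactin[OF cC Fcont])
    then have clFC: "closed (F ` C)" by (simp add: compact_imp_closed)
    have QC: "Q \<subseteq> C" using QP PK P Qle by (auto simp: C_def topspace_weak)
    have "closure T \<subseteq> F ` C" using QC FQ clFC by (metis closure_minimal image_mono)
    moreover have "F M \<in> closure T"
    proof (rule ccontr)
      assume nin: "F M \<notin> closure T"
      have "open (- closure T)" by (rule open_Compl[OF closed_closure])
      then have "(- closure T) \<inter> T \<noteq> {}" using Tdense[of "- closure T" "F M"] nin M by auto
      then show False using closure_subset[of T] by auto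
    qed
    ultimately obtain N where N: "N \<in> C" "F M = F N" by auto
    have "N \<in> borel_prob_measures" using N(1) by (auto simp: C_def topspace_weak)
    then have "M = N" using Finj[of M N] N(2) M P by auto
    then show False using N(1) t by (auto simp: C_def)
  qed
  show ?thesis using Qc QP main by blast
qed



theorem theorem4p3:
  fixes \<P> :: "'a::polish_space measure set"
  assumes "\<P> \<subseteq> borel_prob_measures"
    and "weakly_rel_compact \<P>"
  shows "\<exists>\<Q>. countable \<Q> \<and> \<Q> \<subseteq> \<P> \<and>
           (\<forall>p::real. 1 \<le> p \<longrightarrow>
              (\<forall>X\<in>L1_set p \<P>. cap p \<P> X = (SUP Pn\<in>\<Q>. Epow p Pn X))
              \<and> cap p \<P> = cap p \<Q> \<and> L1_set p \<P> = L1_set p \<Q>)"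
proof -
  obtain \<Q> where Q: "countable \<Q>" "\<Q> \<subseteq> \<P>"
    and dense: "\<forall>g M t. g \<in> Cb \<longrightarrow> M \<in> \<P> \<longrightarrow> t < integral\<^sup>L M g \<longrightarrow> (\<exists>N\<in>\<Q>. t < integral\<^sup>L N g)"
    using exists_Q[OF assms] by blast
  have "(\<forall>X\<in>L1_set p \<P>. cap p \<P> X = (SUP Pn\<in>\<Q>. Epow p Pn X))
              \<and> cap p \<P> = cap p \<Q> \<and> L1_set p \<P> = L1_set p \<Q>" if p: "1 \<le> p" for p :: real
    by (rule main_from_Q[OF assms(1) Q(2) _ p]) (use dense in blast)
  then show ?thesis using Q by blast
qed

end
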